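(* Let $A$ be a $d\times n$ integer matrix whose columns generate $\mathbb{Z}^d$ and such that $(1,\dots,1)$ lies in the $\mathbb{Q}$-row span of $A$. Then for every $\beta\in\mathbb{C}^d$, $M_A(\beta)$ endowed with its quotient $(F,V)$-bifiltration is nicely bifiltered.
   Context: $D=\mathbb{C}[x_1,\dots,x_n]\langle\partial_1,\dots,\partial_n\rangle$. $I_A\subset\mathbb{C}[\partial]$ is generated by $\partial^u-\partial^v$ with $Au=Av$; $H_A(\beta)=DI_A+\sum_iD(\sum_ja_{ij}x_j\partial_j-\beta_i)$; $M_A(\beta)=D/H_A(\beta)$. $F$-filtration: weights $0$ on $x$, $1$ on $\partial$. $V$-filtration along the origin: weights $-1$ on $x_i$, $1$ on $\partial_i$. $F_{d,k}(D)=F_d(D)\cap V_k(D)$, and $F_{d,k}(M_A(\beta))=(F_{d,k}(D)+H_A(\beta))/H_A(\beta)$. The bifiltration is nice if $(\bigcup_{d'}F_{d',k}(M))\cap(\bigcup_{k'}F_{d,k'}(M))=F_{d,k}(M)$ for all $d,k$. *)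

theory Defs
  imports "HOL-Analysis.Analysis" "HOL-Library.Poly_Mapping"
begin

text \<open>Weyl algebra D = C[x_1..x_n]<d_1..d_n>, elements in normally ordered form
  sum c_(a,b) x^a d^b, represented as finitely supported maps from exponent pairs
  (a,b) (a = exponent of x, b = exponent of d) to complex coefficients.\<close>

type_synonym mono = "(nat \<Rightarrow>\<^sub>0 nat) \<times> (nat \<Rightarrow>\<^sub>0 nat)"
type_synonym weyl = "mono \<Rightarrow>\<^sub>0 complex"

definition tdeg :: "(nat \<Rightarrow>\<^sub>0 nat) \<Rightarrow> nat" where
  "tdeg a = (\<Sum>i\<in>Poly_Mapping.keys a. Poly_Mapping.lookup a i)"

text \<open>Product of monomials: x^a d^b * x^c d^e =
  sum_{k <= b, k <= c} prod_i binom(b_i,k_i) * c_i!/(c_i-k_i)! * x^(a+c-k) d^(b-k+e).\<close>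
definition mono_mult :: "mono \<Rightarrow> mono \<Rightarrow> weyl" where
  "mono_mult m1 m2 = (case m1 of (a, b) \<Rightarrow> case m2 of (c, e) \<Rightarrow>
     (\<Sum>k\<in>{k. \<forall>i. Poly_Mapping.lookup k i \<le> Poly_Mapping.lookup b i \<and> Poly_Mapping.lookup k i \<le> Poly_Mapping.lookup c i}.
        Poly_Mapping.single (a + c - k, b - k + e)
          (of_nat (\<Prod>i\<in>Poly_Mapping.keys k. (Poly_Mapping.lookup b i choose Poly_Mapping.lookup k i) *
                     (fact (Poly_Mapping.lookup c i) div fact (Poly_Mapping.lookup c i - Poly_Mapping.lookup k i))))))"

definition wmult :: "weyl \<Rightarrow> weyl \<Rightarrow> weyl" where
  "wmult P Q = (\<Sum>m1\<in>Poly_Mapping.keys P. \<Sum>m2\<in>Poly_Mapping.keys Q.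
      Poly_Mapping.map (\<lambda>z. Poly_Mapping.lookup P m1 * Poly_Mapping.lookup Q m2 * z) (mono_mult m1 m2))"

definition wconst :: "complex \<Rightarrow> weyl" where
  "wconst c = Poly_Mapping.single (0, 0) c"

definition weyl_D :: "nat \<Rightarrow> weyl set" where
  "weyl_D n = {P. \<forall>(a, b)\<in>Poly_Mapping.keys P. Poly_Mapping.keys a \<subseteq> {..<n} \<and> Poly_Mapping.keys b \<subseteq> {..<n}}"

inductive_set left_ideal :: "nat \<Rightarrow> weyl set \<Rightarrow> weyl set" for n G where
  zero: "0 \<in> left_ideal n G"
| gen: "g \<in> G \<Longrightarrow> Q \<in> weyl_D n \<Longrightarrow> wmult Q g \<in> left_ideal n G"
| add: "P \<in> left_ideal n G \<Longrightarrow> R \<in> left_ideal n G \<Longrightarrow> P + R \<in> left_ideal n G"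

text \<open>A is a d x n integer matrix given by its entries A i j, i < d, j < n.\<close>
definition Amul :: "(nat \<Rightarrow> nat \<Rightarrow> int) \<Rightarrow> nat \<Rightarrow> (nat \<Rightarrow>\<^sub>0 nat) \<Rightarrow> nat \<Rightarrow> int" where
  "Amul A n u i = (\<Sum>j<n. A i j * int (Poly_Mapping.lookup u j))"

definition toric_gens :: "(nat \<Rightarrow> nat \<Rightarrow> int) \<Rightarrow> nat \<Rightarrow> nat \<Rightarrow> weyl set" where
  "toric_gens A d n = {Poly_Mapping.single (0, u) 1 - Poly_Mapping.single (0, v) 1 | u v.
      Poly_Mapping.keys u \<subseteq> {..<n} \<and> Poly_Mapping.keys v \<subseteq> {..<n} \<and> (\<forall>i<d. Amul A n u i = Amul A n v i)}"

definition euler_op :: "(nat \<Rightarrow> nat \<Rightarrow> int) \<Rightarrow> nat \<Rightarrow> complex \<Rightarrow> nat \<Rightarrow> weyl" where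
  "euler_op A n c i = (\<Sum>j<n. Poly_Mapping.single (Poly_Mapping.single j 1, Poly_Mapping.single j 1)
        (of_int (A i j))) - wconst c"

definition H_A :: "(nat \<Rightarrow> nat \<Rightarrow> int) \<Rightarrow> nat \<Rightarrow> nat \<Rightarrow> (nat \<Rightarrow> complex) \<Rightarrow> weyl set" where
  "H_A A d n \<beta> = left_ideal n (toric_gens A d n \<union> {euler_op A n (\<beta> i) i | i. i < d})"

definition FV :: "nat \<Rightarrow> int \<Rightarrow> int \<Rightarrow> weyl set" where
  "FV n p k = {P \<in> weyl_D n. \<forall>(a, b)\<in>Poly_Mapping.keys P.
       int (tdeg b) \<le> p \<and> int (tdeg b) - int (tdeg a) \<le> k}"

text \<open>Quotient map D -> D/H, classes represented as cosets.\<close>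
definition coset :: "weyl set \<Rightarrow> weyl \<Rightarrow> weyl set" where
  "coset H P = {P + h | h. h \<in> H}"

definition FV_M :: "(nat \<Rightarrow> nat \<Rightarrow> int) \<Rightarrow> nat \<Rightarrow> nat \<Rightarrow> (nat \<Rightarrow> complex) \<Rightarrow> int \<Rightarrow> int \<Rightarrow> weyl set set" where
  "FV_M A d n \<beta> p k = coset (H_A A d n \<beta>) ` FV n p k"

definition nicely_bifiltered :: "(int \<Rightarrow> int \<Rightarrow> 'm set) \<Rightarrow> bool" where
  "nicely_bifiltered F \<longleftrightarrow> (\<forall>p k. (\<Union>p'. F p' k) \<inter> (\<Union>k'. F p k') = F p k)"

end

theory Submission
  imports Defs
begin

lemma lookup_pmap: "Poly_Mapping.lookup (Poly_Mapping.map f p) m = (if Poly_Mapping.lookup p m = 0 then 0 else f (Poly_Mapping.lookup p m))"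
  by (simp add: Poly_Mapping.map.rep_eq when_def)

lemma keys_pmap: "Poly_Mapping.keys (Poly_Mapping.map f p) \<subseteq> Poly_Mapping.keys p"
  by (auto simp: in_keys_iff lookup_pmap split: if_splits)

definition wt :: "mono \<Rightarrow> int" where
  "wt m = int (tdeg (snd m)) - int (tdeg (fst m))"

definition trunc :: "int \<Rightarrow> weyl \<Rightarrow> weyl" where
  "trunc k P = Abs_poly_mapping (\<lambda>m. if wt m \<le> k then Poly_Mapping.lookup P m else 0)"

lemma lookup_trunc: "Poly_Mapping.lookup (trunc k P) m = (if wt m \<le> k then Poly_Mapping.lookup P m else 0)"
proof -
  have "finite {m. (if wt m \<le> k then Poly_Mapping.lookup P m else 0) \<noteq> 0}"
    by (rule finite_subset[of _ "{m. Poly_Mapping.lookup P m \<noteq> 0}"]) auto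
  then show ?thesis unfolding trunc_def by simp
qed

lemma keys_trunc: "Poly_Mapping.keys (trunc k P) = {m \<in> Poly_Mapping.keys P. wt m \<le> k}"
  by (auto simp: in_keys_iff lookup_trunc split: if_splits)

lemma trunc_add: "trunc k (P + Q) = trunc k P + trunc k Q"
  by (rule poly_mapping_eqI) (simp add: lookup_trunc lookup_add)

lemma trunc_zero[simp]: "trunc k 0 = 0"
  by (rule poly_mapping_eqI) (simp add: lookup_trunc)

lemma trunc_sum: "trunc k (sum f A) = (\<Sum>x\<in>A. trunc k (f x))"
  by (induction A rule: infinite_finite_induct) (auto simp: trunc_add)

lemma trunc_hom: "\<forall>m\<in>Poly_Mapping.keys X. wt m = w \<Longrightarrow> trunc k X = (if w \<le> k then X else 0)"
  by (rule poly_mapping_eqI) (auto simp: lookup_trunc in_keys_iff)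

lemma trunc_id: "\<forall>m\<in>Poly_Mapping.keys X. wt m \<le> k \<Longrightarrow> trunc k X = X"
  by (rule poly_mapping_eqI) (auto simp: lookup_trunc in_keys_iff)

lemma tdeg_sum: "finite S \<Longrightarrow> Poly_Mapping.keys a \<subseteq> S \<Longrightarrow> tdeg a = (\<Sum>i\<in>S. Poly_Mapping.lookup a i)"
  unfolding tdeg_def by (rule sum.mono_neutral_left) (auto simp: in_keys_iff)

lemma wt_mono_mult:
  assumes "m \<in> Poly_Mapping.keys (mono_mult m1 m2)" shows "wt m = wt m1 + wt m2"
proof -
  obtain a b where m1: "m1 = (a, b)" by force
  obtain c e where m2: "m2 = (c, e)" by force
  let ?K = "{k. \<forall>i. Poly_Mapping.lookup k i \<le> Poly_Mapping.lookup b i \<and> Poly_Mapping.lookup k i \<le> Poly_Mapping.lookup c i}"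
  from assms have "m \<in> (\<Union>k\<in>?K. Poly_Mapping.keys (Poly_Mapping.single (a + c - k, b - k + e)
          (of_nat (\<Prod>i\<in>Poly_Mapping.keys k. (Poly_Mapping.lookup b i choose Poly_Mapping.lookup k i) *
                     (fact (Poly_Mapping.lookup c i) div fact (Poly_Mapping.lookup c i - Poly_Mapping.lookup k i)))) :: weyl))"
    unfolding mono_mult_def m1 m2 using keys_sum by fastforce
  then obtain k where kK: "k \<in> ?K" and mk: "m = (a + c - k, b - k + e)"
    by (auto split: if_splits)
  define S where "S = Poly_Mapping.keys a \<union> Poly_Mapping.keys b \<union> Poly_Mapping.keys c \<union> Poly_Mapping.keys e \<union> Poly_Mapping.keys k"
  have fS: "finite S" unfolding S_def by simp
  have sub: "Poly_Mapping.keys x \<subseteq> S" if "\<forall>i. i \<notin> S \<longrightarrow> Poly_Mapping.lookup x i = 0" for x :: "nat \<Rightarrow>\<^sub>0 nat"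
    using that by (auto simp: in_keys_iff)
  have l1: "Poly_Mapping.lookup (a + c - k) i = Poly_Mapping.lookup a i + Poly_Mapping.lookup c i - Poly_Mapping.lookup k i" for i
    by (simp add: lookup_minus lookup_add)
  have l2: "Poly_Mapping.lookup (b - k + e) i = Poly_Mapping.lookup b i - Poly_Mapping.lookup k i + Poly_Mapping.lookup e i" for i
    by (simp add: lookup_minus lookup_add)
  have nz: "i \<notin> S \<Longrightarrow> Poly_Mapping.lookup x i = 0" if "x \<in> {a,b,c,e,k}" for x i
    using that by (auto simp: S_def in_keys_iff)
  have t1: "tdeg (a + c - k) = (\<Sum>i\<in>S. Poly_Mapping.lookup (a + c - k) i)"
    by (rule tdeg_sum[OF fS sub]) (auto simp: l1 nz)
  have t2: "tdeg (b - k + e) = (\<Sum>i\<in>S. Poly_Mapping.lookup (b - k + e) i)"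
    by (rule tdeg_sum[OF fS sub]) (auto simp: l2 nz)
  have ta: "tdeg a = (\<Sum>i\<in>S. Poly_Mapping.lookup a i)" by (rule tdeg_sum[OF fS]) (auto simp: S_def)
  have tb: "tdeg b = (\<Sum>i\<in>S. Poly_Mapping.lookup b i)" by (rule tdeg_sum[OF fS]) (auto simp: S_def)
  have tc: "tdeg c = (\<Sum>i\<in>S. Poly_Mapping.lookup c i)" by (rule tdeg_sum[OF fS]) (auto simp: S_def)
  have te: "tdeg e = (\<Sum>i\<in>S. Poly_Mapping.lookup e i)" by (rule tdeg_sum[OF fS]) (auto simp: S_def)
  have "int (tdeg (b - k + e)) - int (tdeg (a + c - k)) =
        (\<Sum>i\<in>S. int (Poly_Mapping.lookup b i) + int (Poly_Mapping.lookup e i) - int (Poly_Mapping.lookup a i) - int (Poly_Mapping.lookup c i))"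
    unfolding t1 t2 of_nat_sum l1 l2 sum_subtractf[symmetric]
    apply (rule sum.cong[OF refl])
    subgoal for x
      using kK by (auto simp: of_nat_diff dest!: spec[of _ x])
    done
  also have "\<dots> = (int (tdeg b) - int (tdeg a)) + (int (tdeg e) - int (tdeg c))"
    unfolding ta tb tc te of_nat_sum by (simp add: sum.distrib sum_subtractf)
  finally show ?thesis unfolding wt_def mk m1 m2 by simp
qed


lemma wt_wmult_keys:
  assumes "m \<in> Poly_Mapping.keys (wmult Q g)"
  shows "\<exists>m1\<in>Poly_Mapping.keys Q. \<exists>m2\<in>Poly_Mapping.keys g. wt m = wt m1 + wt m2"
proof -
  let ?f = "\<lambda>m1 m2. Poly_Mapping.map (\<lambda>z. Poly_Mapping.lookup Q m1 * Poly_Mapping.lookup g m2 * z) (mono_mult m1 m2)"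
  have "m \<in> (\<Union>m1\<in>Poly_Mapping.keys Q. Poly_Mapping.keys (\<Sum>m2\<in>Poly_Mapping.keys g. ?f m1 m2))"
    by (rule subsetD[OF keys_sum]) (use assms in \<open>simp add: wmult_def\<close>)
  then obtain m1 where m1: "m1 \<in> Poly_Mapping.keys Q"
    "m \<in> Poly_Mapping.keys (\<Sum>m2\<in>Poly_Mapping.keys g. ?f m1 m2)" by (rule UN_E)
  have "m \<in> (\<Union>m2\<in>Poly_Mapping.keys g. Poly_Mapping.keys (?f m1 m2))"
    by (rule subsetD[OF keys_sum]) (rule m1(2))
  then obtain m2 where m2: "m2 \<in> Poly_Mapping.keys g" "m \<in> Poly_Mapping.keys (?f m1 m2)" by (rule UN_E)
  have "m \<in> Poly_Mapping.keys (mono_mult m1 m2)" by (rule subsetD[OF keys_pmap m2(2)])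
  then have "wt m = wt m1 + wt m2" by (rule wt_mono_mult)
  then show ?thesis using m1(1) m2(1) by blast
qed

lemma trunc_wmult:
  assumes hg: "\<forall>m\<in>Poly_Mapping.keys g. wt m = w"
  shows "trunc k (wmult Q g) = wmult (trunc (k - w) Q) g"
proof -
  let ?t = "\<lambda>c m1 m2. Poly_Mapping.map (\<lambda>z. c * Poly_Mapping.lookup g m2 * z) (mono_mult m1 m2)"
  have "trunc k (wmult Q g) = (\<Sum>m1\<in>Poly_Mapping.keys Q. \<Sum>m2\<in>Poly_Mapping.keys g. trunc k (?t (Poly_Mapping.lookup Q m1) m1 m2))"
    unfolding wmult_def trunc_sum by simp
  also have "\<dots> = (\<Sum>m1\<in>Poly_Mapping.keys Q. if wt m1 \<le> k - w then (\<Sum>m2\<in>Poly_Mapping.keys g. ?t (Poly_Mapping.lookup Q m1) m1 m2) else 0)"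
  proof (rule sum.cong[OF refl])
    fix m1
    have "trunc k (?t (Poly_Mapping.lookup Q m1) m1 m2) = (if wt m1 \<le> k - w then ?t (Poly_Mapping.lookup Q m1) m1 m2 else 0)"
      if "m2 \<in> Poly_Mapping.keys g" for m2
    proof -
      have "\<forall>m\<in>Poly_Mapping.keys (?t (Poly_Mapping.lookup Q m1) m1 m2). wt m = wt m1 + w"
        using keys_pmap wt_mono_mult hg that by fastforce
      from trunc_hom[OF this] show ?thesis by auto
    qed
    then show "(\<Sum>m2\<in>Poly_Mapping.keys g. trunc k (?t (Poly_Mapping.lookup Q m1) m1 m2)) =
      (if wt m1 \<le> k - w then (\<Sum>m2\<in>Poly_Mapping.keys g. ?t (Poly_Mapping.lookup Q m1) m1 m2) else 0)"
      by simp
  qed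
  also have "\<dots> = (\<Sum>m1\<in>{m1\<in>Poly_Mapping.keys Q. wt m1 \<le> k - w}. \<Sum>m2\<in>Poly_Mapping.keys g. ?t (Poly_Mapping.lookup Q m1) m1 m2)"
    by (rule sum.inter_filter[symmetric]) simp
  also have "\<dots> = wmult (trunc (k - w) Q) g"
    unfolding wmult_def keys_trunc by (rule sum.cong) (auto simp: lookup_trunc)
  finally show ?thesis .
qed

lemma wmult_neg: "wmult (- Q) g = - wmult Q g"
  unfolding wmult_def keys_minus sum_negf[symmetric]
  by (intro sum.cong refl poly_mapping_eqI) (simp add: lookup_pmap lookup_sum sum_negf[symmetric])

lemma keys_neg_D: "Q \<in> weyl_D n \<Longrightarrow> - Q \<in> weyl_D n"
  unfolding weyl_D_def by simp

lemma trunc_D: "Q \<in> weyl_D n \<Longrightarrow> trunc k Q \<in> weyl_D n"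
  unfolding weyl_D_def by (fastforce simp: keys_trunc)

lemma left_ideal_neg: "P \<in> left_ideal n G \<Longrightarrow> - P \<in> left_ideal n G"
proof (induction rule: left_ideal.induct)
  case zero then show ?case by (simp add: left_ideal.zero)
next
  case (gen g Q)
  have "- wmult Q g = wmult (- Q) g" by (simp add: wmult_neg)
  show ?case unfolding wmult_neg[symmetric] by (rule left_ideal.gen[OF gen(1) keys_neg_D[OF gen(2)]])
next
  case (add P R)
  have "- (P + R) = (- P) + (- R)" by simp
  then show ?case by (simp only:) (rule left_ideal.add[OF add.IH])
qed

lemma left_ideal_trunc:
  assumes "\<forall>g\<in>G. \<exists>w. \<forall>m\<in>Poly_Mapping.keys g. wt m = w"
  shows "P \<in> left_ideal n G \<Longrightarrow> trunc k P \<in> left_ideal n G"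
proof (induction arbitrary: k rule: left_ideal.induct)
  case zero then show ?case by (simp add: left_ideal.zero)
next
  case (gen g Q)
  then obtain w where "\<forall>m\<in>Poly_Mapping.keys g. wt m = w" using assms by blast
  then have "trunc k (wmult Q g) = wmult (trunc (k - w) Q) g" by (rule trunc_wmult)
  then show ?case using gen by (simp add: left_ideal.gen trunc_D)
next
  case (add P R) then show ?case by (simp add: trunc_add left_ideal.add)
qed


lemma keys_diff_sub: "Poly_Mapping.keys (P - Q) \<subseteq> Poly_Mapping.keys P \<union> Poly_Mapping.keys Q"
  by (auto simp: in_keys_iff lookup_minus)

lemma tdeg_zero[simp]: "tdeg 0 = 0"
  by (simp add: tdeg_def)

lemma tdeg_single1[simp]: "tdeg (Poly_Mapping.single j (1::nat)) = 1"
  by (simp add: tdeg_def)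

lemma tdeg_rat:
  fixes r :: "nat \<Rightarrow> rat"
  assumes hr: "\<forall>j<n. (\<Sum>i<d. r i * of_int (A i j)) = 1"
    and ku: "Poly_Mapping.keys u \<subseteq> {..<n}"
  shows "(of_nat (tdeg u) :: rat) = (\<Sum>i<d. r i * of_int (Amul A n u i))"
proof -
  have "(of_nat (tdeg u) :: rat) = (\<Sum>j<n. of_nat (Poly_Mapping.lookup u j))"
    by (simp add: tdeg_sum[OF _ ku])
  also have "\<dots> = (\<Sum>j<n. of_nat (Poly_Mapping.lookup u j) * (\<Sum>i<d. r i * of_int (A i j)))"
    using hr by simp
  also have "\<dots> = (\<Sum>j<n. \<Sum>i<d. r i * (of_int (A i j) * of_nat (Poly_Mapping.lookup u j)))"
    by (simp add: sum_distrib_left mult_ac)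
  also have "\<dots> = (\<Sum>i<d. \<Sum>j<n. r i * (of_int (A i j) * of_nat (Poly_Mapping.lookup u j)))"
    by (rule sum.swap)
  also have "\<dots> = (\<Sum>i<d. r i * of_int (Amul A n u i))"
    by (simp add: Amul_def sum_distrib_left)
  finally show ?thesis .
qed

lemma gens_hom:
  assumes homog: "\<exists>r :: nat \<Rightarrow> rat. \<forall>j<n. (\<Sum>i<d. r i * of_int (A i j)) = 1"
  shows "\<forall>g\<in>toric_gens A d n \<union> {euler_op A n (\<beta> i) i | i. i < d}. \<exists>w. \<forall>m\<in>Poly_Mapping.keys g. wt m = w"
proof
  fix g assume "g \<in> toric_gens A d n \<union> {euler_op A n (\<beta> i) i | i. i < d}"
  then have "g \<in> {Poly_Mapping.single (0, u) 1 - Poly_Mapping.single (0, v) 1 | u v.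
      Poly_Mapping.keys u \<subseteq> {..<n} \<and> Poly_Mapping.keys v \<subseteq> {..<n} \<and> (\<forall>i<d. Amul A n u i = Amul A n v i)}
      \<union> {euler_op A n (\<beta> i) i | i. i < d}" unfolding toric_gens_def .
  then consider (t) u v where "g = Poly_Mapping.single (0, u) 1 - Poly_Mapping.single (0, v) 1"
      "Poly_Mapping.keys u \<subseteq> {..<n}" "Poly_Mapping.keys v \<subseteq> {..<n}" "\<forall>i<d. Amul A n u i = Amul A n v i"
    | (e) i where "g = euler_op A n (\<beta> i) i"
    by (elim UnE CollectE exE conjE) (rule that; assumption)+
  then show "\<exists>w. \<forall>m\<in>Poly_Mapping.keys g. wt m = w"
  proof cases
    case t
    obtain r :: "nat \<Rightarrow> rat" where hr: "\<forall>j<n. (\<Sum>i<d. r i * of_int (A i j)) = 1" using homog by blast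
    have "(of_nat (tdeg u) :: rat) = of_nat (tdeg v)"
      using tdeg_rat[OF hr t(2)] tdeg_rat[OF hr t(3)] t(4) by simp
    then have eq: "tdeg u = tdeg v" by simp
    have "\<forall>m\<in>Poly_Mapping.keys g. wt m = int (tdeg u)"
    proof
      fix m assume "m \<in> Poly_Mapping.keys g"
      then have "m \<in> Poly_Mapping.keys (Poly_Mapping.single (0, u) (1::complex)) \<union> Poly_Mapping.keys (Poly_Mapping.single (0, v) (1::complex))"
        unfolding t(1) by (rule subsetD[OF keys_diff_sub])
      then have "m \<in> {(0, u), (0, v)}" by (simp; blast)
      then show "wt m = int (tdeg u)" using eq by (auto simp: wt_def)
    qed
    then show ?thesis by blast
  next
    case e
    have "\<forall>m\<in>Poly_Mapping.keys g. wt m = 0"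
    proof
      fix m assume "m \<in> Poly_Mapping.keys g"
      then have "m \<in> Poly_Mapping.keys (\<Sum>j<n. Poly_Mapping.single (Poly_Mapping.single j 1, Poly_Mapping.single j 1)
        (of_int (A i j) :: complex)) \<union> Poly_Mapping.keys (wconst (\<beta> i))"
        unfolding e euler_op_def by (rule subsetD[OF keys_diff_sub])
      then show "wt m = 0"
      proof (rule UnE)
        assume "m \<in> Poly_Mapping.keys (\<Sum>j<n. Poly_Mapping.single (Poly_Mapping.single j 1, Poly_Mapping.single j 1)
          (of_int (A i j) :: complex))"
        then have "m \<in> (\<Union>j<n. Poly_Mapping.keys (Poly_Mapping.single (Poly_Mapping.single j 1, Poly_Mapping.single j (1::nat))
          (of_int (A i j) :: complex)))" by (rule subsetD[OF keys_sum])
        then obtain j where "m \<in> Poly_Mapping.keys (Poly_Mapping.single (Poly_Mapping.single j 1, Poly_Mapping.single j (1::nat))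
          (of_int (A i j) :: complex))" by blast
        then have "m = (Poly_Mapping.single j 1, Poly_Mapping.single j 1)" by (simp split: if_splits)
        then show "wt m = 0" by (simp add: wt_def)
      next
        assume "m \<in> Poly_Mapping.keys (wconst (\<beta> i))"
        then have "m = (0, 0)" by (simp add: wconst_def split: if_splits)
        then show "wt m = 0" by (simp add: wt_def)
      qed
    qed
    then show ?thesis by blast
  qed
qed

lemma coset_shift:
  assumes "t \<in> left_ideal n G" shows "coset (left_ideal n G) (P + t) = coset (left_ideal n G) P"
proof
  show "coset (left_ideal n G) (P + t) \<subseteq> coset (left_ideal n G) P"
  proof
    fix x assume "x \<in> coset (left_ideal n G) (P + t)"
    then obtain h where "h \<in> left_ideal n G" "x = P + t + h" unfolding coset_def by blast
    then show "x \<in> coset (left_ideal n G) P"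
    proof -
      have "t + h \<in> left_ideal n G" by (rule left_ideal.add[OF assms \<open>h \<in> left_ideal n G\<close>])
      moreover have "x = P + (t + h)" using \<open>x = P + t + h\<close> by (simp add: add.assoc)
      ultimately show ?thesis unfolding coset_def by blast
    qed
  qed
next
  show "coset (left_ideal n G) P \<subseteq> coset (left_ideal n G) (P + t)"
  proof
    fix x assume "x \<in> coset (left_ideal n G) P"
    then obtain h where h: "h \<in> left_ideal n G" "x = P + h" unfolding coset_def by blast
    have "h + - t \<in> left_ideal n G" using left_ideal.add[OF h(1) left_ideal_neg[OF assms]] .
    moreover have "x = P + t + (h + - t)" using h(2) by simp
    ultimately show "x \<in> coset (left_ideal n G) (P + t)" unfolding coset_def by blast
  qed
qed

theorem lemma9:
  fixes A :: "nat \<Rightarrow> nat \<Rightarrow> int" and d n :: nat and \<beta> :: "nat \<Rightarrow> complex"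
  assumes gen: "\<forall>w :: nat \<Rightarrow> int. \<exists>c :: nat \<Rightarrow> int. \<forall>i<d. w i = (\<Sum>j<n. c j * A i j)"
    and homog: "\<exists>r :: nat \<Rightarrow> rat. \<forall>j<n. (\<Sum>i<d. r i * of_int (A i j)) = 1"
  shows "nicely_bifiltered (FV_M A d n \<beta>)"
  unfolding nicely_bifiltered_def
proof (intro allI equalityI)
  fix p k
  let ?G = "toric_gens A d n \<union> {euler_op A n (\<beta> i) i | i. i < d}"
  let ?H = "H_A A d n \<beta>"
  have Hdef: "?H = left_ideal n ?G" unfolding H_A_def ..
  show "FV_M A d n \<beta> p k \<subseteq> (\<Union>p'. FV_M A d n \<beta> p' k) \<inter> (\<Union>k'. FV_M A d n \<beta> p k')" by blast
  show "(\<Union>p'. FV_M A d n \<beta> p' k) \<inter> (\<Union>k'. FV_M A d n \<beta> p k') \<subseteq> FV_M A d n \<beta> p k"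
  proof
    fix c assume "c \<in> (\<Union>p'. FV_M A d n \<beta> p' k) \<inter> (\<Union>k'. FV_M A d n \<beta> p k')"
    then obtain p' k' P1 P2 where P1: "P1 \<in> FV n p' k" "c = coset ?H P1"
      and P2: "P2 \<in> FV n p k'" "c = coset ?H P2"
      unfolding FV_M_def by blast
    have "P2 \<in> coset ?H P2" unfolding coset_def Hdef using left_ideal.zero by force
    then have "P2 \<in> coset ?H P1" using P1(2) P2(2) by simp
    then obtain h where h: "h \<in> ?H" "P2 = P1 + h" unfolding coset_def by blast
    have t1: "trunc k P1 = P1"
      by (rule trunc_id) (use P1(1) in \<open>auto simp: FV_def wt_def\<close>)
    have th: "trunc k h \<in> ?H" unfolding Hdef
      by (rule left_ideal_trunc[OF gens_hom[OF homog]]) (use h(1) Hdef in simp)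
    have P3: "trunc k P2 = P1 + trunc k h" using h(2) t1 by (simp add: trunc_add)
    have "coset ?H (trunc k P2) = c" unfolding P3 P1(2) Hdef by (rule coset_shift) (use th Hdef in simp)
    moreover have "trunc k P2 \<in> FV n p k"
      using P2(1) unfolding FV_def weyl_D_def by (fastforce simp: keys_trunc wt_def)
    ultimately show "c \<in> FV_M A d n \<beta> p k" unfolding FV_M_def by blast
  qed
qed

end
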